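(* Let $b\ge 1$ and $L\ge 1$ be integers. Let $A$ be the set of permutations $s\in\mathcal{S}_L$ all of whose cycles have length at most $b$, and let $B$ be the set of permutations $t\in\mathcal{S}_L$ such that there do not exist integers $i,j$ with $j\ge 0$, $j+b<i\le L$ and $t(j+k)>t(i)$ for all $k\in\{1,\ldots,b\}$. Then the map $s\mapsto \widetilde{F(s)}$ is a bijection from $A$ onto $B$. In particular $|A|=|B|$.
   Context: $\mathcal{S}_L$ denotes the set of permutations of $\{1,\ldots,L\}$; a permutation $s$ is identified with the word $s(1)s(2)\cdots s(L)$. Cycles include fixed points. The Foata correspondence $F:\mathcal{S}_L\to\mathcal{S}_L$ is defined as follows. Take the cycle decomposition of $s$ (including fixed points). Write each cycle starting with its largest element (the cycle head), i.e. the cycle with largest element $c_1$ is written $[c_1\,s(c_1)\,s^2(c_1)\cdots s^{d-1}(c_1)]$ where $d$ is its length. Order the cycles so that their cycle heads are increasing from left to right. Removing the brackets gives a word with $L$ distinct letters from $\{1,\ldots,L\}$, regarded as a permutation; this is $F(s)$. (Example: $s=359724681$ has cycles $[139][25][476][8]$, written canonically as $[52][764][8][913]$, so $F(s)=527648913$.) It is a known fact that $F$ is a bijection of $\mathcal{S}_L$. For $u\in\mathcal{S}_L$, $\tilde u\in\mathcal{S}_L$ is defined by $\tilde u(i)=L+1-u(L+1-i)$ for all $i$ (rotation of the point diagram by $180$ degrees). *)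

theory Defs
  imports "HOL-Combinatorics.Permutations"
begin

definition perms :: "nat \<Rightarrow> (nat \<Rightarrow> nat) set" where
  "perms L = {p. p permutes {1..L}}"

definition cyc_len :: "(nat \<Rightarrow> nat) \<Rightarrow> nat \<Rightarrow> nat" where
  "cyc_len s c = (LEAST n. 0 < n \<and> (s ^^ n) c = c)"

definition cyc_elems :: "(nat \<Rightarrow> nat) \<Rightarrow> nat \<Rightarrow> nat set" where
  "cyc_elems s c = {(s ^^ k) c | k. True}"

definition cyc_heads :: "nat \<Rightarrow> (nat \<Rightarrow> nat) \<Rightarrow> nat set" where
  "cyc_heads L s = {c \<in> {1..L}. c = Max (cyc_elems s c)}"

definition cyc_word :: "(nat \<Rightarrow> nat) \<Rightarrow> nat \<Rightarrow> nat list" where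
  "cyc_word s c = map (\<lambda>k. (s ^^ k) c) [0..<cyc_len s c]"

definition foata_word :: "nat \<Rightarrow> (nat \<Rightarrow> nat) \<Rightarrow> nat list" where
  "foata_word L s = concat (map (cyc_word s) (sorted_list_of_set (cyc_heads L s)))"

definition foata :: "nat \<Rightarrow> (nat \<Rightarrow> nat) \<Rightarrow> (nat \<Rightarrow> nat)" where
  "foata L s = (\<lambda>i. if i \<in> {1..L} then foata_word L s ! (i - 1) else i)"

definition tilde :: "nat \<Rightarrow> (nat \<Rightarrow> nat) \<Rightarrow> (nat \<Rightarrow> nat)" where
  "tilde L u = (\<lambda>i. if i \<in> {1..L} then L + 1 - u (L + 1 - i) else i)"

definition setA :: "nat \<Rightarrow> nat \<Rightarrow> (nat \<Rightarrow> nat) set" where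
  "setA b L = {s \<in> perms L. \<forall>c\<in>{1..L}. cyc_len s c \<le> b}"

definition setB :: "nat \<Rightarrow> nat \<Rightarrow> (nat \<Rightarrow> nat) set" where
  "setB b L = {t \<in> perms L. \<not> (\<exists>i j. j + b < i \<and> i \<le> L \<and>
                                      (\<forall>k\<in>{1..b}. t (j + k) > t i))}"

end

theory Submission
  imports Defs
begin


lemma cyc_exists:
  fixes s :: "nat \<Rightarrow> nat"
  assumes "s permutes {1..L}" shows "\<exists>n>0. (s ^^ n) c = c"
proof -
  have "permutation s" by (rule permutes_imp_permutation[OF _ assms]) simp
  then obtain n where "n>0" "(s^^n) c = c" by (rule permutation_self)
  thus ?thesis by blast
qed

lemma cyc_len_pos:
  assumes "s permutes {1..L}" shows "0 < cyc_len s c" "(s ^^ cyc_len s c) c = c"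
proof -
  obtain n where "n>0" "(s^^n) c = c" using cyc_exists[OF assms] by blast
  hence "0 < cyc_len s c \<and> (s ^^ cyc_len s c) c = c"
    unfolding cyc_len_def using LeastI[of "\<lambda>n. 0 < n \<and> (s ^^ n) c = c" n] by blast
  thus "0 < cyc_len s c" "(s ^^ cyc_len s c) c = c" by auto
qed

lemma cyc_len_min:
  assumes "0 < n" "n < cyc_len s c" shows "(s ^^ n) c \<noteq> c"
  using not_less_Least[of n "\<lambda>n. 0 < n \<and> (s ^^ n) c = c"] assms unfolding cyc_len_def by simp

lemma inj_pow: fixes s :: "nat \<Rightarrow> nat" assumes "s permutes {1..L}" shows "inj (s ^^ k)"
  by (rule inj_fn[OF permutes_inj[OF assms]])

lemma pow_comm: "(s ^^ n) ((s ^^ k) c) = (s ^^ k) ((s ^^ n) c)"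
  by (metis add.commute comp_apply funpow_add)

lemma cyc_len_shift:
  assumes "s permutes {1..L}" shows "cyc_len s ((s ^^ k) c) = cyc_len s c"
proof -
  have "(s ^^ n) ((s ^^ k) c) = (s ^^ k) c \<longleftrightarrow> (s ^^ n) c = c" for n
    using inj_pow[OF assms, of k] pow_comm[where s=s and n=n and k=k and c=c] by (metis injD)
  thus ?thesis unfolding cyc_len_def by simp
qed

lemma cyc_word_distinct:
  assumes "s permutes {1..L}" shows "distinct (cyc_word s c)"
proof -
  have D: "(s ^^ i) c \<noteq> (s ^^ j) c" if "i < j" "j < cyc_len s c" for i j
  proof
    assume eq: "(s ^^ i) c = (s ^^ j) c"
    have e: "i + (j - i) = j" using that by simp
    have "(s ^^ i) ((s ^^ (j - i)) c) = (s ^^ (i + (j - i))) c" by (simp only: funpow_add comp_apply)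
    hence "(s ^^ i) c = (s ^^ i) ((s ^^ (j - i)) c)" unfolding e using eq by simp
    hence "(s ^^ (j-i)) c = c" using injD[OF inj_pow[OF assms, of i]] by metis
    moreover have "0 < j - i" "j - i < cyc_len s c" using that by auto
    ultimately show False using cyc_len_min by blast
  qed
  have "inj_on (\<lambda>k. (s ^^ k) c) {0..<cyc_len s c}"
  proof (rule inj_onI)
    fix i j assume ij: "i \<in> {0..<cyc_len s c}" "j \<in> {0..<cyc_len s c}" "(s ^^ i) c = (s ^^ j) c"
    show "i = j"
    proof (rule ccontr)
      assume "i \<noteq> j"
      hence "i < j \<or> j < i" by linarith
      thus False using D ij by (metis atLeastLessThan_iff)
    qed
  qed
  thus ?thesis unfolding cyc_word_def by (simp add: distinct_map)
qed

lemma cyc_elems_eq: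
  assumes "s permutes {1..L}" shows "cyc_elems s c = set (cyc_word s c)"
proof -
  have "(s ^^ k) c = (s ^^ (k mod cyc_len s c)) c" for k
    using funpow_mod_eq[where f=s and n="cyc_len s c" and x=c and m=k] cyc_len_pos[OF assms] by simp
  moreover have "k mod cyc_len s c < cyc_len s c" for k using cyc_len_pos[OF assms] by simp
  ultimately have "\<exists>j<cyc_len s c. (s ^^ k) c = (s ^^ j) c" for k by blast
  thus ?thesis unfolding cyc_elems_def cyc_word_def by fastforce
qed

lemma cyc_elems_sub:
  assumes "s permutes {1..L}" "c \<in> {1..L}" shows "cyc_elems s c \<subseteq> {1..L}"
  unfolding cyc_elems_def using permutes_in_funpow_image[OF assms] by auto

lemma cyc_elems_same:
  assumes "s permutes {1..L}" "y \<in> cyc_elems s c" shows "cyc_elems s y = cyc_elems s c"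
proof -
  obtain k where y: "y = (s ^^ k) c" using assms(2) unfolding cyc_elems_def by auto
  let ?d = "cyc_len s c"
  have "(s ^^ j) y \<in> cyc_elems s c" for j
    unfolding y cyc_elems_def by (auto simp: funpow_add intro!: exI[of _ "j+k"])
  moreover have "(s ^^ j) c \<in> cyc_elems s y" for j
  proof -
    have d: "0 < ?d" "(s ^^ ?d) c = c" using cyc_len_pos[OF assms(1)] by auto
    have "k \<le> ?d * k" using d(1) by simp
    hence mk: "j + ?d * k - k + k = j + ?d * k" by linarith
    have "(s ^^ j) c = (s ^^ (j mod ?d)) c"
      using funpow_mod_eq[where f=s and n="?d" and x=c and m=j] d by simp
    also have "\<dots> = (s ^^ ((j + ?d * k) mod ?d)) c" by simp
    also have "\<dots> = (s ^^ (j + ?d * k)) c"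
      using funpow_mod_eq[where f=s and n="?d" and x=c and m="j + ?d*k"] d by simp
    also have "\<dots> = (s ^^ (j + ?d * k - k + k)) c" by (simp only: mk)
    also have "\<dots> = (s ^^ (j + ?d * k - k)) y" unfolding y by (simp only: funpow_add comp_apply)
    finally show ?thesis unfolding cyc_elems_def by auto
  qed
  ultimately show ?thesis unfolding cyc_elems_def by auto
qed



definition good :: "nat list list \<Rightarrow> bool" where
  "good Bs \<longleftrightarrow> (\<forall>B\<in>set Bs. B \<noteq> [] \<and> (\<forall>x\<in>set (tl B). x < hd B)) \<and> sorted_wrt (<) (map hd Bs)"

lemma good_ConsD: "good (B#Bs) \<Longrightarrow> good Bs \<and> B \<noteq> [] \<and> (\<forall>x\<in>set (tl B). x < hd B)
   \<and> (\<forall>B'\<in>set Bs. hd B < hd B')"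
  unfolding good_def by auto

lemma le_hd:
  fixes B :: "nat list"
  assumes "B \<noteq> []" "\<forall>x\<in>set (tl B). x < hd B" "i < length B" shows "B ! i \<le> hd B"
proof (cases i)
  case 0 thus ?thesis using assms(1) by (simp add: hd_conv_nth)
next
  case (Suc m)
  hence e: "B ! i = tl B ! m" using assms(1) by (cases B) auto
  have "m < length (tl B)" using assms(3) Suc by simp
  hence "tl B ! m \<in> set (tl B)" by (rule nth_mem)
  hence "tl B ! m < hd B" using assms(2) by blast
  thus ?thesis using e by simp
qed

lemma concat_hd: "good Bs \<Longrightarrow> concat Bs \<noteq> [] \<Longrightarrow> \<exists>B' Bs'. Bs = B' # Bs' \<and> concat Bs ! 0 = hd B'"
  unfolding good_def by (cases Bs) (auto simp: hd_conv_nth[symmetric] nth_append)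

lemma no_shorter:
  assumes "good (B#Bs)" "good (C#Cs)" "concat (B#Bs) = concat (C#Cs)"
  shows "\<not> length B < length C"
proof
  assume lt: "length B < length C"
  note gB = good_ConsD[OF assms(1)] and gC = good_ConsD[OF assms(2)]
  let ?w = "concat (B#Bs)"
  have "length B < length ?w" using lt assms(3) by simp
  hence "concat Bs \<noteq> []" by auto
  then obtain B2 Bs2 where B2: "Bs = B2 # Bs2" "concat Bs ! 0 = hd B2"
    using concat_hd gB by blast
  have "?w ! length B = hd B2" using B2 by (simp add: nth_append)
  moreover have "?w ! length B = C ! length B" using assms(3) lt by (simp add: nth_append)
  moreover have "C ! length B \<in> set (tl C)"
  proof -
    have "length B \<ge> 1" using gB by (cases B) auto
    hence "C ! length B = tl C ! (length B - 1)" using lt by (cases C) (auto simp: nth_Cons')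
    thus ?thesis using lt \<open>length B \<ge> 1\<close> by (metis diff_less_mono length_tl nth_mem)
  qed
  moreover have "hd C = hd B"
    using assms(3) gB gC by (cases B; cases C) auto
  ultimately have "hd B2 < hd B" using gC by auto
  moreover have "hd B < hd B2" using gB B2 by auto
  ultimately show False by simp
qed

lemma concat_inj: "good Bs \<Longrightarrow> good Cs \<Longrightarrow> concat Bs = concat Cs \<Longrightarrow> Bs = Cs"
proof (induction Bs arbitrary: Cs)
  case Nil
  thus ?case unfolding good_def by (cases Cs) auto
next
  case (Cons B Bs)
  have "B \<noteq> []" using good_ConsD[OF Cons.prems(1)] by auto
  then obtain C Cs' where Cs: "Cs = C # Cs'" using Cons.prems(3) by (cases Cs) auto
  have "length B = length C"
    using no_shorter[of B Bs C Cs'] no_shorter[of C Cs' B Bs] Cons.prems Cs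
    by (metis linorder_neqE_nat)
  hence "B = C" using Cons.prems(3) Cs by (metis append_eq_append_conv concat.simps(2))
  moreover have "concat Bs = concat Cs'" using Cons.prems(3) Cs \<open>B = C\<close> by simp
  ultimately show ?case using Cons.IH[of Cs'] good_ConsD[OF Cons.prems(1)]
      good_ConsD[of C Cs'] Cons.prems(2) Cs by auto
qed

lemma long_block:
  assumes "good Bs" "b \<ge> 1"
  shows "(\<exists>B\<in>set Bs. b < length B) \<longleftrightarrow>
    (\<exists>p q. p < q \<and> q + b \<le> length (concat Bs) \<and> (\<forall>k<b. concat Bs ! (q+k) < concat Bs ! p))"
  using assms(1)
proof (induction Bs)
  case Nil
  thus ?case using assms(2) by auto
next
  case (Cons B Bs)
  note gB = good_ConsD[OF Cons.prems]
  define n where "n = length B"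
  define w' where "w' = concat Bs"
  have w: "concat (B#Bs) = B @ w'" unfolding w'_def by simp
  have shift: "(B @ w') ! (n + x) = w' ! x" for x unfolding n_def by simp
  note IH = Cons.IH[OF conjunct1[OF gB], folded w'_def]
  show ?case
  proof
    assume "\<exists>B'\<in>set (B#Bs). b < length B'"
    then consider "b < n" | "\<exists>B'\<in>set Bs. b < length B'" unfolding n_def by auto
    thus "\<exists>p q. p < q \<and> q + b \<le> length (concat (B#Bs)) \<and> (\<forall>k<b. concat (B#Bs) ! (q+k) < concat (B#Bs) ! p)"
    proof cases
      case 1
      have "\<forall>k<b. (B @ w') ! (1+k) < (B @ w') ! 0"
      proof (intro allI impI)
        fix k assume "k < b"
        hence k: "1 + k < n" using 1 by simp
        have "(B @ w') ! (1+k) = tl B ! k" using k gB unfolding n_def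
          by (cases B) (auto simp: nth_append)
        moreover have "tl B ! k \<in> set (tl B)" using k unfolding n_def by simp
        moreover have "(B @ w') ! 0 = hd B" using gB by (cases B) auto
        ultimately show "(B @ w') ! (1+k) < (B @ w') ! 0" using gB by auto
      qed
      moreover have "1 + b \<le> length (B @ w')" using 1 unfolding n_def by simp
      ultimately show ?thesis unfolding w by (intro exI[of _ 0] exI[of _ 1]) auto
    next
      case 2
      then obtain p q where pq: "p < q" "q + b \<le> length w'" "\<forall>k<b. w' ! (q+k) < w' ! p"
        using IH by blast
      have "\<forall>k<b. (B @ w') ! (n+q+k) < (B @ w') ! (n+p)"
        using pq(3) shift by (metis add.assoc)
      moreover have "n + q + b \<le> length (B @ w')" using pq(2) unfolding n_def by simp
      ultimately show ?thesis unfolding w using pq(1)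
        by (intro exI[of _ "n+p"] exI[of _ "n+q"]) auto
    qed
  next
    assume "\<exists>p q. p < q \<and> q + b \<le> length (concat (B#Bs)) \<and> (\<forall>k<b. concat (B#Bs) ! (q+k) < concat (B#Bs) ! p)"
    then obtain p q where pq: "p < q" "q + b \<le> length (B @ w')" "\<forall>k<b. (B @ w') ! (q+k) < (B @ w') ! p"
      unfolding w by blast
    show "\<exists>B'\<in>set (B#Bs). b < length B'"
    proof (rule ccontr)
      assume nl: "\<not> (\<exists>B'\<in>set (B#Bs). b < length B')"
      hence nb: "n \<le> b" unfolding n_def by auto
      have nlBs: "\<not> (\<exists>p q. p < q \<and> q + b \<le> length w' \<and> (\<forall>k<b. w' ! (q+k) < w' ! p))"
        using IH nl by auto
      show False
      proof (cases "n \<le> p")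
        case True
        have "\<forall>k<b. w' ! (q-n+k) < w' ! (p-n)"
        proof (intro allI impI)
          fix k assume "k<b"
          hence "(B @ w') ! (n + (q-n+k)) < (B @ w') ! (n + (p-n))" using pq True by simp
          thus "w' ! (q-n+k) < w' ! (p-n)" by (simp only: shift)
        qed
        moreover have "q - n + b \<le> length w'" using pq True unfolding n_def by simp
        ultimately show False using nlBs pq(1) True
          by (meson diff_less_mono less_le_trans less_imp_le)
      next
        case False
        hence pB: "(B @ w') ! p \<le> hd B"
          using le_hd[of B p] gB unfolding n_def by (simp add: nth_append)
        have "n < length (B @ w')" using pq nb \<open>\<not> n \<le> p\<close> by linarith
        hence "w' \<noteq> []" unfolding n_def by simp
        then obtain B2 Bs2 where B2: "Bs = B2 # Bs2" "w' ! 0 = hd B2"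
          using concat_hd[of Bs] gB unfolding w'_def by blast
        have h2: "hd B < hd B2" using gB B2 by auto
        show False
        proof (cases "q \<le> n")
          case True
          have "n - q < b" using True nb pq(1) by linarith
          hence "(B @ w') ! (q + (n-q)) < (B @ w') ! p" using pq(3) by blast
          moreover have "(B @ w') ! (q + (n-q)) = hd B2" using True B2 shift[of 0] by simp
          ultimately show False using pB h2 by simp
        next
          case qn: False
          have "\<forall>k<b. w' ! (q-n+k) < w' ! 0"
          proof (intro allI impI)
            fix k assume "k<b"
            hence "(B @ w') ! (n + (q-n+k)) < (B @ w') ! p" using pq qn by simp
            thus "w' ! (q-n+k) < w' ! 0" using pB h2 B2 by (simp only: shift)
          qed
          moreover have "q - n + b \<le> length w'" using pq qn unfolding n_def by simp
          ultimately show False using nlBs qn by (metis zero_less_diff not_le)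
        qed
      qed
    qed
  qed
qed


lemma cw_basic:
  assumes "s permutes {1..L}"
  shows "cyc_word s c \<noteq> []" "hd (cyc_word s c) = c" "length (cyc_word s c) = cyc_len s c"
proof -
  have d: "0 < cyc_len s c" using cyc_len_pos[OF assms] by simp
  show "cyc_word s c \<noteq> []" "length (cyc_word s c) = cyc_len s c"
    using d unfolding cyc_word_def by auto
  have "[0..<cyc_len s c] = 0 # [1..<cyc_len s c]" using d by (simp add: upt_rec)
  thus "hd (cyc_word s c) = c" unfolding cyc_word_def by simp
qed

lemma cw_nth: "r < cyc_len s c \<Longrightarrow> cyc_word s c ! r = (s ^^ r) c"
  unfolding cyc_word_def by simp

lemma cw_step:
  assumes "s permutes {1..L}" "r < cyc_len s c"
  shows "s (cyc_word s c ! r) = (if r+1 < cyc_len s c then cyc_word s c ! (r+1) else c)"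
proof -
  have e: "s (cyc_word s c ! r) = (s ^^ Suc r) c" using cw_nth[OF assms(2)] by simp
  show ?thesis
  proof (cases "r + 1 < cyc_len s c")
    case True
    thus ?thesis using e cw_nth[of "r+1" s c] by simp
  next
    case False
    hence "Suc r = cyc_len s c" using assms(2) by simp
    hence "(s ^^ Suc r) c = c" using cyc_len_pos(2)[OF assms(1), of c] by simp
    thus ?thesis using e False by simp
  qed
qed

lemma heads_sub: "cyc_heads L s \<subseteq> {1..L}"
  unfolding cyc_heads_def by auto

lemma x_in_elems: "x \<in> cyc_elems s x"
  unfolding cyc_elems_def by (auto intro!: exI[of _ 0])

lemma head_of:
  assumes "s permutes {1..L}" "x \<in> {1..L}"
  shows "Max (cyc_elems s x) \<in> cyc_heads L s \<and> x \<in> cyc_elems s (Max (cyc_elems s x))"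
proof -
  let ?E = "cyc_elems s x"
  have fin: "finite ?E" using cyc_elems_sub[OF assms] finite_subset by blast
  have ne: "?E \<noteq> {}" using x_in_elems by blast
  have hE: "Max ?E \<in> ?E" using Max_in[OF fin ne] .
  have eq: "cyc_elems s (Max ?E) = ?E" using cyc_elems_same[OF assms(1) hE] .
  have "Max ?E \<in> {1..L}" using hE cyc_elems_sub[OF assms] by blast
  thus ?thesis using eq x_in_elems unfolding cyc_heads_def by auto
qed

lemma head_tl:
  assumes "s permutes {1..L}" "h \<in> cyc_heads L s"
  shows "\<forall>y\<in>set (tl (cyc_word s h)). y < h"
proof
  fix y assume y: "y \<in> set (tl (cyc_word s h))"
  have hL: "h \<in> {1..L}" and hM: "h = Max (cyc_elems s h)" using assms(2) unfolding cyc_heads_def by auto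
  have fin: "finite (cyc_elems s h)" using cyc_elems_sub[OF assms(1) hL] finite_subset by blast
  have "y \<in> cyc_elems s h" using y cyc_elems_eq[OF assms(1)] by (metis list.set_sel(2) tl_Nil empty_iff list.set(1))
  hence "y \<le> Max (cyc_elems s h)" using fin by (rule Max_ge[rotated])
  hence "y \<le> h" by (simp add: hM[symmetric])
  moreover have "y \<noteq> h"
  proof
    assume "y = h"
    have "distinct (cyc_word s h)" using cyc_word_distinct[OF assms(1)] .
    moreover have "cyc_word s h = h # tl (cyc_word s h)" using cw_basic[OF assms(1), of h]
      by (metis list.collapse)
    ultimately show False using y \<open>y = h\<close> by (metis distinct.simps(2))
  qed
  ultimately show "y < h" by simp
qed

definition blocks :: "nat \<Rightarrow> (nat \<Rightarrow> nat) \<Rightarrow> nat list list" where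
  "blocks L s = map (cyc_word s) (sorted_list_of_set (cyc_heads L s))"

lemma fw_blocks: "foata_word L s = concat (blocks L s)"
  unfolding foata_word_def blocks_def ..

lemma map_hd_blocks:
  assumes "s permutes {1..L}"
  shows "map hd (blocks L s) = sorted_list_of_set (cyc_heads L s)"
  unfolding blocks_def using cw_basic(2)[OF assms] by (simp add: map_idI)

lemma blocks_good:
  assumes "s permutes {1..L}" shows "good (blocks L s)"
proof -
  have fin: "finite (cyc_heads L s)" using heads_sub finite_subset by blast
  have "\<forall>B\<in>set (blocks L s). B \<noteq> [] \<and> (\<forall>x\<in>set (tl B). x < hd B)"
    unfolding blocks_def using cw_basic[OF assms] head_tl[OF assms] fin by auto
  moreover have "sorted_wrt (<) (map hd (blocks L s))"
    unfolding map_hd_blocks[OF assms] by (simp add: strict_sorted_list_of_set)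
  ultimately show ?thesis unfolding good_def by blast
qed

lemma fw_set:
  assumes "s permutes {1..L}" shows "set (foata_word L s) = {1..L}"
proof -
  have fin: "finite (cyc_heads L s)" using heads_sub finite_subset by blast
  have "set (foata_word L s) = (\<Union>h\<in>cyc_heads L s. cyc_elems s h)"
    unfolding foata_word_def using fin cyc_elems_eq[OF assms] by auto
  also have "\<dots> = {1..L}"
  proof
    show "(\<Union>h\<in>cyc_heads L s. cyc_elems s h) \<subseteq> {1..L}"
      using cyc_elems_sub[OF assms] heads_sub by blast
    show "{1..L} \<subseteq> (\<Union>h\<in>cyc_heads L s. cyc_elems s h)"
      using head_of[OF assms] by blast
  qed
  finally show ?thesis .
qed

lemma fw_distinct:
  assumes "s permutes {1..L}" shows "distinct (foata_word L s)"
proof -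
  have fin: "finite (cyc_heads L s)" using heads_sub finite_subset by blast
  let ?hs = "sorted_list_of_set (cyc_heads L s)"
  have inj: "inj_on (cyc_word s) (set ?hs)"
    by (rule inj_onI) (metis cw_basic(2)[OF assms])
  have disj: "cyc_elems s h1 \<inter> cyc_elems s h2 = {}"
    if "h1 \<in> cyc_heads L s" "h2 \<in> cyc_heads L s" "h1 \<noteq> h2" for h1 h2
  proof (rule ccontr)
    assume "cyc_elems s h1 \<inter> cyc_elems s h2 \<noteq> {}"
    then obtain y where "y \<in> cyc_elems s h1" "y \<in> cyc_elems s h2" by blast
    hence "cyc_elems s h1 = cyc_elems s h2" using cyc_elems_same[OF assms] by metis
    thus False using that unfolding cyc_heads_def by auto
  qed
  show ?thesis unfolding foata_word_def
  proof (rule distinct_concat)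
    show "distinct (map (cyc_word s) ?hs)" using inj by (simp add: distinct_map)
    show "\<And>ys. ys \<in> set (map (cyc_word s) ?hs) \<Longrightarrow> distinct ys"
      using cyc_word_distinct[OF assms] by auto
    show "\<And>ys zs. ys \<in> set (map (cyc_word s) ?hs) \<Longrightarrow> zs \<in> set (map (cyc_word s) ?hs) \<Longrightarrow> ys \<noteq> zs \<Longrightarrow> set ys \<inter> set zs = {}"
      using disj fin cyc_elems_eq[OF assms] by auto
  qed
qed

lemma fw_length:
  assumes "s permutes {1..L}" shows "length (foata_word L s) = L"
  using distinct_card[OF fw_distinct[OF assms]] fw_set[OF assms] by simp

lemma foata_perm:
  assumes "s permutes {1..L}" shows "foata L s permutes {1..L}"
proof (rule bij_imp_permutes)
  let ?w = "foata_word L s"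
  show "\<And>x. x \<notin> {1..L} \<Longrightarrow> foata L s x = x" unfolding foata_def by auto
  show "bij_betw (foata L s) {1..L} {1..L}"
  proof (rule bij_betw_imageI)
    show "inj_on (foata L s) {1..L}"
    proof (rule inj_onI)
      fix i j assume "i \<in> {1..L}" "j \<in> {1..L}" "foata L s i = foata L s j"
      hence "?w ! (i-1) = ?w ! (j-1)" "i - 1 < length ?w" "j - 1 < length ?w"
        unfolding foata_def using fw_length[OF assms] by auto
      hence "i - 1 = j - 1" using fw_distinct[OF assms] nth_eq_iff_index_eq by blast
      thus "i = j" using \<open>i \<in> {1..L}\<close> \<open>j \<in> {1..L}\<close> by auto
    qed
    show "foata L s ` {1..L} = {1..L}"
    proof
      show "foata L s ` {1..L} \<subseteq> {1..L}"
      proof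
        fix y assume "y \<in> foata L s ` {1..L}"
        then obtain i where i: "i \<in> {1..L}" "y = foata L s i" by blast
        hence "y = ?w ! (i - 1)" "i - 1 < length ?w" using fw_length[OF assms] unfolding foata_def by auto
        thus "y \<in> {1..L}" using fw_set[OF assms] nth_mem by metis
      qed
      show "{1..L} \<subseteq> foata L s ` {1..L}"
      proof
        fix y assume "y \<in> {1..L}"
        hence "y \<in> set ?w" using fw_set[OF assms] by simp
        then obtain k where k: "k < length ?w" "y = ?w ! k" by (metis in_set_conv_nth)
        hence "Suc k \<in> {1..L}" "foata L s (Suc k) = y" using fw_length[OF assms] unfolding foata_def by auto
        thus "y \<in> foata L s ` {1..L}" by (metis imageI)
      qed
    qed
  qed
qed


lemma foata_nth: "i \<in> {1..L} \<Longrightarrow> foata L s i = foata_word L s ! (i - 1)"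
  unfolding foata_def by simp

lemma foata_inj:
  assumes s: "s permutes {1..L}" and s': "s' permutes {1..L}" and eq: "foata L s = foata L s'"
  shows "s = s'"
proof -
  have weq: "foata_word L s = foata_word L s'"
  proof (rule nth_equalityI)
    show "length (foata_word L s) = length (foata_word L s')" using fw_length s s' by simp
    fix i assume "i < length (foata_word L s)"
    hence "Suc i \<in> {1..L}" using fw_length[OF s] by simp
    thus "foata_word L s ! i = foata_word L s' ! i"
      using foata_nth[of "Suc i" L s] foata_nth[of "Suc i" L s'] eq by simp
  qed
  have beq: "blocks L s = blocks L s'"
    using concat_inj[OF blocks_good[OF s] blocks_good[OF s']] weq by (simp add: fw_blocks)
  have fin: "finite (cyc_heads L s)" "finite (cyc_heads L s')" using heads_sub finite_subset by blast+
  have hseq: "sorted_list_of_set (cyc_heads L s) = sorted_list_of_set (cyc_heads L s')"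
    using map_hd_blocks[OF s] map_hd_blocks[OF s'] beq by simp
  hence heq: "cyc_heads L s = cyc_heads L s'" using fin by (metis set_sorted_list_of_set)
  have cweq: "cyc_word s h = cyc_word s' h" if "h \<in> cyc_heads L s" for h
  proof -
    have "map (cyc_word s) (sorted_list_of_set (cyc_heads L s)) = map (cyc_word s') (sorted_list_of_set (cyc_heads L s))"
      using beq hseq unfolding blocks_def by simp
    thus ?thesis using that fin by (simp add: map_eq_conv)
  qed
  show "s = s'"
  proof
    fix x show "s x = s' x"
    proof (cases "x \<in> {1..L}")
      case False thus ?thesis using s s' by (simp add: permutes_not_in)
    next
      case True
      define h where "h = Max (cyc_elems s x)"
      have hh: "h \<in> cyc_heads L s" "x \<in> cyc_elems s h" using head_of[OF s True] h_def by auto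
      then obtain r where r: "r < length (cyc_word s h)" "x = cyc_word s h ! r"
        using cyc_elems_eq[OF s] by (metis in_set_conv_nth)
      have cw: "cyc_word s' h = cyc_word s h" using cweq hh by simp
      have len: "cyc_len s' h = cyc_len s h" using cw cw_basic(3)[OF s] cw_basic(3)[OF s'] by metis
      have rl: "r < cyc_len s h" using r cw_basic(3)[OF s] by simp
      have "s x = (if r+1 < cyc_len s h then cyc_word s h ! (r+1) else h)"
        using cw_step[OF s rl] r by simp
      moreover have "s' x = (if r+1 < cyc_len s' h then cyc_word s' h ! (r+1) else h)"
        using cw_step[OF s', of r h] rl len r cw by simp
      ultimately show ?thesis using cw len by simp
    qed
  qed
qed

lemma setA_char:
  assumes s: "s permutes {1..L}"
  shows "(\<forall>c\<in>{1..L}. cyc_len s c \<le> b) \<longleftrightarrow> \<not> (\<exists>B\<in>set (blocks L s). b < length B)"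
proof -
  have fin: "finite (cyc_heads L s)" using heads_sub finite_subset by blast
  have "(\<forall>c\<in>{1..L}. cyc_len s c \<le> b) \<longleftrightarrow> (\<forall>h\<in>cyc_heads L s. cyc_len s h \<le> b)"
  proof
    assume "\<forall>c\<in>{1..L}. cyc_len s c \<le> b" thus "\<forall>h\<in>cyc_heads L s. cyc_len s h \<le> b"
      using heads_sub by blast
  next
    assume A: "\<forall>h\<in>cyc_heads L s. cyc_len s h \<le> b"
    show "\<forall>c\<in>{1..L}. cyc_len s c \<le> b"
    proof
      fix c assume c: "c \<in> {1..L}"
      define h where "h = Max (cyc_elems s c)"
      have hh: "h \<in> cyc_heads L s" "c \<in> cyc_elems s h" using head_of[OF s c] h_def by auto
      then obtain k where "c = (s ^^ k) h" unfolding cyc_elems_def by auto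
      thus "cyc_len s c \<le> b" using cyc_len_shift[OF s] A hh by simp
    qed
  qed
  also have "\<dots> \<longleftrightarrow> \<not> (\<exists>B\<in>set (blocks L s). b < length B)"
    unfolding blocks_def using fin cw_basic(3)[OF s] by auto
  finally show ?thesis .
qed

lemma tilde_perm:
  assumes "u permutes {1..L}" shows "tilde L u permutes {1..L}"
proof (rule bij_imp_permutes)
  show "\<And>x. x \<notin> {1..L} \<Longrightarrow> tilde L u x = x" unfolding tilde_def by auto
  have uin: "u y \<in> {1..L}" if "y \<in> {1..L}" for y using permutes_in_image[OF assms] that by simp
  have tv: "tilde L u i = L + 1 - u (L + 1 - i)" "L + 1 - i \<in> {1..L}" if "i \<in> {1..L}" for i
    using that unfolding tilde_def by auto
  show "bij_betw (tilde L u) {1..L} {1..L}"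
  proof (rule bij_betw_imageI)
    show "inj_on (tilde L u) {1..L}"
    proof (rule inj_onI)
      fix i j assume ij: "i \<in> {1..L}" "j \<in> {1..L}" "tilde L u i = tilde L u j"
      have "u (L + 1 - i) \<in> {1..L}" "u (L + 1 - j) \<in> {1..L}" using uin tv ij by blast+
      moreover have "L + 1 - u (L + 1 - i) = L + 1 - u (L + 1 - j)" using tv(1)[OF ij(1)] tv(1)[OF ij(2)] ij(3) by simp
      ultimately have "u (L + 1 - i) \<le> L" "u (L + 1 - j) \<le> L" "L + 1 - u (L + 1 - i) = L + 1 - u (L + 1 - j)" by auto
      hence "u (L + 1 - i) = u (L + 1 - j)" by linarith
      hence "L + 1 - i = L + 1 - j" using injD[OF permutes_inj[OF assms]] by blast
      thus "i = j" using ij by auto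
    qed
    show "tilde L u ` {1..L} = {1..L}"
    proof
      show "tilde L u ` {1..L} \<subseteq> {1..L}"
      proof
        fix y assume "y \<in> tilde L u ` {1..L}"
        then obtain i where i: "i \<in> {1..L}" "y = tilde L u i" by blast
        have "u (L + 1 - i) \<in> {1..L}" using uin tv i by blast
        thus "y \<in> {1..L}" using tv(1)[OF i(1)] i(2) by auto
      qed
      show "{1..L} \<subseteq> tilde L u ` {1..L}"
      proof
        fix y assume y: "y \<in> {1..L}"
        have "L + 1 - y \<in> u ` {1..L}" using permutes_image[OF assms] y by auto
        then obtain x where x0: "L + 1 - y = u x" "x \<in> {1..L}" by (rule imageE)
        hence x: "x \<in> {1..L}" "u x = L + 1 - y" by auto
        have xx: "L + 1 - (L + 1 - x) = x" using x by auto
        have xin: "L + 1 - x \<in> {1..L}" using x by auto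
        hence "tilde L u (L + 1 - x) = L + 1 - u (L + 1 - (L + 1 - x))" by (rule tv(1))
        also have "\<dots> = L + 1 - u x" using xx by simp
        also have "\<dots> = y" using x y by simp
        finally have "tilde L u (L + 1 - x) = y" .
        moreover note xin
        ultimately show "y \<in> tilde L u ` {1..L}" by blast
      qed
    qed
  qed
qed

lemma tilde_inv:
  assumes "u permutes {1..L}" shows "tilde L (tilde L u) = u"
proof
  fix i
  have uin: "u y \<in> {1..L}" if "y \<in> {1..L}" for y using permutes_in_image[OF assms] that by simp
  show "tilde L (tilde L u) i = u i"
  proof (cases "i \<in> {1..L}")
    case True
    have a: "L + 1 - i \<in> {1..L}" using True by auto
    show ?thesis unfolding tilde_def using True a uin[OF True] by auto
  next
    case False
    have "u i = i" using permutes_not_in[OF assms False] .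
    moreover have "\<not> (1 \<le> i \<and> i \<le> L)" using False by auto
    ultimately show ?thesis unfolding tilde_def by simp
  qed
qed

lemma setB_char:
  assumes len: "length w = L" and sw: "set w \<subseteq> {1..L}" and u: "\<forall>i\<in>{1..L}. u i = w ! (i - 1)"
    and b: "b \<ge> 1"
  shows "(\<exists>i j. j + b < i \<and> i \<le> L \<and> (\<forall>k\<in>{1..b}. tilde L u (j + k) > tilde L u i)) \<longleftrightarrow>
         (\<exists>p q. p < q \<and> q + b \<le> L \<and> (\<forall>k<b. w ! (q + k) < w ! p))"
proof -
  have wle: "w ! m \<le> L" if "m < L" for m using sw len that nth_mem by fastforce
  have tv: "tilde L u m = L + 1 - w ! (L - m)" if "m \<in> {1..L}" for m
  proof -
    have "L + 1 - m \<in> {1..L}" using that by auto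
    hence "u (L + 1 - m) = w ! (L - m)" using u by simp
    thus ?thesis unfolding tilde_def using that by simp
  qed
  have cmp: "tilde L u m' > tilde L u m \<longleftrightarrow> w ! (L - m') < w ! (L - m)"
    if "m \<in> {1..L}" "m' \<in> {1..L}" for m m'
  proof -
    have "w ! (L - m) \<le> L" "w ! (L - m') \<le> L" using wle that by auto
    thus ?thesis using tv[OF that(1)] tv[OF that(2)] by linarith
  qed
  show ?thesis
  proof
    assume "\<exists>i j. j + b < i \<and> i \<le> L \<and> (\<forall>k\<in>{1..b}. tilde L u (j + k) > tilde L u i)"
    then obtain i j where ij: "j + b < i" "i \<le> L" "\<forall>k\<in>{1..b}. tilde L u (j + k) > tilde L u i" by blast
    have "\<forall>k<b. w ! (L - j - b + k) < w ! (L - i)"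
    proof (intro allI impI)
      fix k assume k: "k < b"
      have "b - k \<in> {1..b}" using k by auto
      hence "tilde L u (j + (b - k)) > tilde L u i" using ij(3) by blast
      moreover have "i \<in> {1..L}" "j + (b - k) \<in> {1..L}" using ij k by auto
      ultimately have "w ! (L - (j + (b - k))) < w ! (L - i)" using cmp by blast
      moreover have idx: "L - (j + (b - k)) = L - j - b + k" using ij k by auto
      ultimately show "w ! (L - j - b + k) < w ! (L - i)" by metis
    qed
    thus "\<exists>p q. p < q \<and> q + b \<le> L \<and> (\<forall>k<b. w ! (q + k) < w ! p)"
      using ij by (intro exI[of _ "L - i"] exI[of _ "L - j - b"]) auto
  next
    assume "\<exists>p q. p < q \<and> q + b \<le> L \<and> (\<forall>k<b. w ! (q + k) < w ! p)"
    then obtain p q where pq: "p < q" "q + b \<le> L" "\<forall>k<b. w ! (q + k) < w ! p" by blast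
    have "\<forall>k\<in>{1..b}. tilde L u (L - q - b + k) > tilde L u (L - p)"
    proof
      fix k assume k: "k \<in> {1..b}"
      have "b - k < b" using k by auto
      hence "w ! (q + (b - k)) < w ! p" using pq(3) by blast
      moreover have "L - (L - q - b + k) = q + (b - k)" "L - (L - p) = p" using pq k by auto
      moreover have "L - p \<in> {1..L}" "L - q - b + k \<in> {1..L}" using pq k by auto
      ultimately show "tilde L u (L - q - b + k) > tilde L u (L - p)" using cmp by metis
    qed
    thus "\<exists>i j. j + b < i \<and> i \<le> L \<and> (\<forall>k\<in>{1..b}. tilde L u (j + k) > tilde L u i)"
      using pq by (intro exI[of _ "L - p"] exI[of _ "L - q - b"]) auto
  qed
qed

lemma char_AB:
  assumes s: "s permutes {1..L}" and b: "b \<ge> 1"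
  shows "s \<in> setA b L \<longleftrightarrow> tilde L (foata L s) \<in> setB b L"
proof -
  let ?w = "foata_word L s"
  have "s \<in> setA b L \<longleftrightarrow> \<not> (\<exists>B\<in>set (blocks L s). b < length B)"
    unfolding setA_def perms_def using s setA_char[OF s] by auto
  also have "\<dots> \<longleftrightarrow> \<not> (\<exists>p q. p < q \<and> q + b \<le> L \<and> (\<forall>k<b. ?w ! (q + k) < ?w ! p))"
    using long_block[OF blocks_good[OF s] b] fw_length[OF s] by (simp add: fw_blocks)
  also have "\<dots> \<longleftrightarrow> \<not> (\<exists>i j. j + b < i \<and> i \<le> L \<and> (\<forall>k\<in>{1..b}. tilde L (foata L s) (j + k) > tilde L (foata L s) i))"
    using setB_char[OF fw_length[OF s] _ _ b, of "foata L s"] fw_set[OF s] foata_nth[of _ L s] by auto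
  also have "\<dots> \<longleftrightarrow> tilde L (foata L s) \<in> setB b L"
    unfolding setB_def perms_def using tilde_perm[OF foata_perm[OF s]] by auto
  finally show ?thesis .
qed

theorem mainTheorem2:
  fixes b L :: nat
  assumes "b \<ge> 1" and "L \<ge> 1"
  shows "bij_betw (\<lambda>s. tilde L (foata L s)) (setA b L) (setB b L)
         \<and> card (setA b L) = card (setB b L)"
proof -
  let ?f = "\<lambda>s. tilde L (foata L s)"
  have fin: "finite (perms L)" unfolding perms_def by (simp add: finite_permutations)
  have maps: "?f ` perms L \<subseteq> perms L"
    unfolding perms_def using tilde_perm foata_perm by blast
  have inj: "inj_on ?f (perms L)"
  proof (rule inj_onI)
    fix s s' assume ss: "s \<in> perms L" "s' \<in> perms L" "?f s = ?f s'"
    have ps: "s permutes {1..L}" "s' permutes {1..L}" using ss unfolding perms_def by auto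
    have "foata L s = tilde L (?f s)" using tilde_inv[OF foata_perm[OF ps(1)]] by simp
    also have "\<dots> = tilde L (?f s')" using ss(3) by simp
    also have "\<dots> = foata L s'" using tilde_inv[OF foata_perm[OF ps(2)]] by simp
    finally show "s = s'" using foata_inj[OF ps] by blast
  qed
  have onto: "?f ` perms L = perms L"
    using card_subset_eq[OF fin maps] card_image[OF inj] by simp
  have bij: "bij_betw ?f (setA b L) (setB b L)"
  proof (rule bij_betw_imageI)
    show "inj_on ?f (setA b L)" using inj by (rule inj_on_subset) (auto simp: setA_def)
    show "?f ` setA b L = setB b L"
    proof
      show "?f ` setA b L \<subseteq> setB b L"
        using char_AB[OF _ assms(1)] unfolding setA_def perms_def by auto
      show "setB b L \<subseteq> ?f ` setA b L"
      proof
        fix t assume t: "t \<in> setB b L"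
        hence "t \<in> perms L" unfolding setB_def by auto
        then obtain s where s: "s \<in> perms L" "t = ?f s" using onto by (metis imageE)
        hence "s \<in> setA b L" using char_AB[of s L b] assms(1) t unfolding perms_def by auto
        thus "t \<in> ?f ` setA b L" using s by blast
      qed
    qed
  qed
  thus ?thesis using bij_betw_same_card by blast
qed


end
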